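(* A topological group $X$ is Choquet if and only if its Raikov completion $\bar X$ is Choquet and $X$ is $G_\delta$-dense in $\bar X$.
   Context: Topological groups are assumed Hausdorff; the Raikov completion $\bar X$ of $X$ is its completion with respect to the two-sided uniformity, a complete topological group containing $X$ as a dense subgroup. The Choquet game $\mathsf{G}_{EN}(X)$ on a topological space $X$ is played by players $\mathsf E$ and $\mathsf N$: $\mathsf E$ starts by choosing a non-empty open set $U_0\subset X$, $\mathsf N$ responds with a non-empty open $U_1\subset U_0$, and at the $n$-th inning $\mathsf E$ chooses a non-empty open $U_{2n}\subset U_{2n-1}$ and $\mathsf N$ responds with a non-empty open $U_{2n+1}\subset U_{2n}$. Player $\mathsf E$ wins if $\bigcap_{n\in\omega}U_n=\emptyset$; otherwise $\mathsf N$ wins. A topological space $X$ is Choquet if player $\mathsf N$ has a winning strategy in $\mathsf{G}_{EN}(X)$. A subset $A$ of a topological space $Y$ is $G_\delta$-dense in $Y$ if $A$ meets every non-empty $G_\delta$-subset of $Y$. *)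

theory Defs
  imports "HOL-Analysis.Analysis" "HOL-Algebra.Group"
begin

definition topological_group :: "('a, 'm) monoid_scheme \<Rightarrow> 'a topology \<Rightarrow> bool" where
  "topological_group G T \<longleftrightarrow>
     group G \<and> topspace T = carrier G \<and> Hausdorff_space T \<and>
     continuous_map (prod_topology T T) T (\<lambda>(x, y). x \<otimes>\<^bsub>G\<^esub> y) \<and>
     continuous_map T T (\<lambda>x. inv\<^bsub>G\<^esub> x)"

text \<open>Cauchy filters for the two-sided uniformity of a topological group: its basic entourages
  are {(x,y). x^-1 y \<in> U and y x^-1 \<in> U} for U an open neighbourhood of the identity.\<close>
definition two_sided_cauchy :: "('a, 'm) monoid_scheme \<Rightarrow> 'a topology \<Rightarrow> 'a filter \<Rightarrow> bool" where
  "two_sided_cauchy G T F \<longleftrightarrow>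
     (\<forall>U. openin T U \<and> \<one>\<^bsub>G\<^esub> \<in> U \<longrightarrow>
        eventually (\<lambda>(x, y). inv\<^bsub>G\<^esub> x \<otimes>\<^bsub>G\<^esub> y \<in> U \<and> y \<otimes>\<^bsub>G\<^esub> inv\<^bsub>G\<^esub> x \<in> U) (F \<times>\<^sub>F F))"

definition raikov_complete :: "('a, 'm) monoid_scheme \<Rightarrow> 'a topology \<Rightarrow> bool" where
  "raikov_complete G T \<longleftrightarrow>
     (\<forall>F. F \<noteq> bot \<and> eventually (\<lambda>x. x \<in> carrier G) F \<and> two_sided_cauchy G T F
          \<longrightarrow> (\<exists>x. limitin T id x F))"

text \<open>(H, S) together with e is a Raikov completion of (G, T): H is a Raikov complete
  topological group and e is a group homomorphism and topological embedding of G onto a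
  dense subgroup of H.  (The Raikov completion is unique up to isomorphism.)\<close>
definition raikov_completion ::
  "('a, 'm) monoid_scheme \<Rightarrow> 'a topology \<Rightarrow> ('b, 'n) monoid_scheme \<Rightarrow> 'b topology \<Rightarrow> ('a \<Rightarrow> 'b) \<Rightarrow> bool" where
  "raikov_completion G T H S e \<longleftrightarrow>
     topological_group H S \<and> raikov_complete H S \<and>
     e \<in> hom G H \<and> embedding_map T S e \<and> S closure_of (e ` carrier G) = topspace S"

text \<open>A position (partial play) of the Choquet game in which N follows strategy \<sigma>:
  moves U 0, ..., U (2n) where all E moves U (2k), k \<le> n, are legal and all N moves
  U (2k+1), k < n, are given by \<sigma> applied to the history so far.\<close>
definition choquet_play :: "'a topology \<Rightarrow> ('a set list \<Rightarrow> 'a set) \<Rightarrow> (nat \<Rightarrow> 'a set) \<Rightarrow> nat \<Rightarrow> bool" where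
  "choquet_play T \<sigma> U n \<longleftrightarrow>
     (\<forall>k\<le>n. openin T (U (2*k)) \<and> U (2*k) \<noteq> {} \<and> (k > 0 \<longrightarrow> U (2*k) \<subseteq> U (2*k - 1)) \<and>
            (k < n \<longrightarrow> U (2*k+1) = \<sigma> (map U [0..<2*k+1])))"

definition choquet_space :: "'a topology \<Rightarrow> bool" where
  "choquet_space T \<longleftrightarrow>
     (\<exists>\<sigma>. (\<forall>U n. choquet_play T \<sigma> U n \<longrightarrow>
              openin T (\<sigma> (map U [0..<2*n+1])) \<and> \<sigma> (map U [0..<2*n+1]) \<noteq> {} \<and>
              \<sigma> (map U [0..<2*n+1]) \<subseteq> U (2*n)) \<and>
          (\<forall>U. (\<forall>n. choquet_play T \<sigma> U n) \<longrightarrow> \<Inter> (range U) \<noteq> {}))"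

definition gdelta_dense :: "'a topology \<Rightarrow> 'a set \<Rightarrow> bool" where
  "gdelta_dense T A \<longleftrightarrow> (\<forall>B. gdelta_in T B \<and> B \<noteq> {} \<longrightarrow> A \<inter> B \<noteq> {})"

end

theory Submission
  imports Defs
begin


definition legal :: "'a topology \<Rightarrow> ('a set list \<Rightarrow> 'a set) \<Rightarrow> bool" where
  "legal T \<sigma> \<longleftrightarrow> (\<forall>U n. choquet_play T \<sigma> U n \<longrightarrow>
              openin T (\<sigma> (map U [0..<2*n+1])) \<and> \<sigma> (map U [0..<2*n+1]) \<noteq> {} \<and>
              \<sigma> (map U [0..<2*n+1]) \<subseteq> U (2*n))"

lemma choquet_space_legal:
  "choquet_space T \<longleftrightarrow> (\<exists>\<sigma>. legal T \<sigma> \<and> (\<forall>U. (\<forall>n. choquet_play T \<sigma> U n) \<longrightarrow> \<Inter> (range U) \<noteq> {}))"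
  unfolding choquet_space_def legal_def by blast

lemma play_mono: "choquet_play T \<sigma> U n \<Longrightarrow> k \<le> n \<Longrightarrow> choquet_play T \<sigma> U k"
  unfolding choquet_play_def by auto

lemma playD:
  assumes "choquet_play T \<sigma> U n" "k \<le> n"
  shows "openin T (U (2*k))" "U (2*k) \<noteq> {}" "0 < k \<Longrightarrow> U (2*k) \<subseteq> U (2*k - 1)"
    "k < n \<Longrightarrow> U (2*k+1) = \<sigma> (map U [0..<2*k+1])"
  using assms unfolding choquet_play_def by blast+

lemma legalD:
  assumes "legal T \<sigma>" "choquet_play T \<sigma> U n"
  shows "openin T (\<sigma> (map U [0..<2*n+1]))" "\<sigma> (map U [0..<2*n+1]) \<noteq> {}"
        "\<sigma> (map U [0..<2*n+1]) \<subseteq> U (2*n)"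
  using assms unfolding legal_def by blast+

lemma play_Suc_subset:
  assumes "legal T \<sigma>" "\<forall>n. choquet_play T \<sigma> U n"
  shows "U (Suc i) \<subseteq> U i"
proof (cases "even i")
  case True
  then obtain k where k: "i = 2*k" by auto
  have "U (2*k+1) = \<sigma> (map U [0..<2*k+1])"
    using playD(4)[of T \<sigma> U "Suc k" k] assms(2) by simp
  also have "\<dots> \<subseteq> U (2*k)" using legalD(3)[OF assms(1)] assms(2) by blast
  finally show ?thesis using k by simp
next
  case False
  then obtain k where k: "i = 2*k+1" by (metis oddE)
  have "U (2*(k+1)) \<subseteq> U (2*(k+1) - 1)"
    using playD(3)[of T \<sigma> U "k+1" "k+1"] assms(2) by simp
  then show ?thesis using k by simp
qed

lemma play_antimono:
  assumes "legal T \<sigma>" "\<forall>n. choquet_play T \<sigma> U n" "i \<le> j"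
  shows "U j \<subseteq> U i"
  using assms(3)
proof (induction j)
  case 0 then show ?case by simp
next
  case (Suc j)
  then show ?case using play_Suc_subset[OF assms(1,2), of j] by (metis le_Suc_eq order_refl subset_trans)
qed

lemma play_open:
  assumes "legal T \<sigma>" "\<forall>n. choquet_play T \<sigma> U n"
  shows "openin T (U i)"
proof (cases "even i")
  case True
  then obtain k where k: "i = 2*k" by auto
  then show ?thesis using assms(2) unfolding choquet_play_def by blast
next
  case False
  then obtain k where k: "i = 2*k+1" by (metis oddE)
  have "U (2*k+1) = \<sigma> (map U [0..<2*k+1])"
    using playD(4)[of T \<sigma> U "Suc k" k] assms(2) by simp
  then show ?thesis using k legalD(1)[OF assms(1)] assms(2) by metis
qed



lemma emb_cont: "embedding_map T S e \<Longrightarrow> continuous_map T S e"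
  unfolding embedding_map_def
  using homeomorphic_imp_continuous_map continuous_map_in_subtopology by blast

lemma emb_open:
  assumes "embedding_map T S e" "openin T W"
  shows "\<exists>Ob. openin S Ob \<and> W = {x\<in>topspace T. e x \<in> Ob}"
proof -
  have h: "homeomorphic_map T (subtopology S (e ` topspace T)) e"
    using assms(1) unfolding embedding_map_def by blast
  have inj: "inj_on e (topspace T)" using homeomorphic_imp_injective_map[OF h] .
  have "openin (subtopology S (e ` topspace T)) (e ` W)"
    using homeomorphic_map_openness[OF h] assms(2) openin_subset by blast
  then obtain Ob where Ob: "openin S Ob" "e ` W = Ob \<inter> e ` topspace T"
    by (auto simp: openin_subtopology)
  have "W = {x\<in>topspace T. e x \<in> Ob}"
  proof
    show "W \<subseteq> {x\<in>topspace T. e x \<in> Ob}" using Ob(2) openin_subset[OF assms(2)] by blast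
    show "{x\<in>topspace T. e x \<in> Ob} \<subseteq> W"
    proof
      fix x assume x: "x \<in> {x\<in>topspace T. e x \<in> Ob}"
      then have "e x \<in> e ` W" using Ob(2) by blast
      then obtain w where "w \<in> W" "e w = e x" by (rule imageE) simp
      then show "x \<in> W" using inj x openin_subset[OF assms(2)] unfolding inj_on_def by blast
    qed
  qed
  then show ?thesis using Ob(1) by blast
qed

lemma dense_meets:
  assumes "S closure_of A = topspace S" "openin S V" "V \<noteq> {}"
  shows "\<exists>y\<in>A. y \<in> V"
proof -
  obtain v where v: "v \<in> V" using assms(3) by blast
  then have "v \<in> S closure_of A" using assms(1,2) openin_subset by blast
  then show ?thesis using v assms(2) unfolding in_closure_of by blast
qed



lemma transfer_to_dense:
  assumes emb: "embedding_map T S e" and dense: "S closure_of (e ` topspace T) = topspace S"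
    and lg: "legal T \<sigma>" and win: "\<forall>U. (\<forall>n. choquet_play T \<sigma> U n) \<longrightarrow> \<Inter> (range U) \<noteq> {}"
  shows "\<exists>\<rho>. legal S \<rho> \<and> (\<forall>V. (\<forall>n. choquet_play S \<rho> V n) \<longrightarrow> \<Inter> (range V) \<inter> e ` topspace T \<noteq> {})"
proof -
  define pre where "pre V = {x\<in>topspace T. e x \<in> V}" for V
  define ext where "ext W = (SOME Ob. openin S Ob \<and> W = pre Ob)" for W
  have ext0: "openin S (ext W) \<and> W = pre (ext W)" if "openin T W" for W
  proof -
    have "\<exists>Ob. openin S Ob \<and> W = pre Ob" using emb_open[OF emb that] unfolding pre_def .
    then show ?thesis unfolding ext_def by (rule someI_ex)
  qed
  have ext: "openin S (ext W) \<and> pre (ext W) = W" if "openin T W" for W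
    using ext0[OF that] by metis
  have pre_open: "openin T (pre V)" if "openin S V" for V
    using openin_continuous_map_preimage[OF emb_cont[OF emb] that] pre_def by simp
  have pre_ne: "pre V \<noteq> {}" if "openin S V" "V \<noteq> {}" for V
    using dense_meets[OF dense that] pre_def by auto
  define \<rho> where "\<rho> ys = ext (\<sigma> (map pre ys)) \<inter> last ys" for ys
  have key: "choquet_play T \<sigma> (\<lambda>i. pre (V i)) n" if "choquet_play S \<rho> V n" for V n
    using that
  proof (induction n)
    case 0
    then have "openin S (V 0)" "V 0 \<noteq> {}" using playD(1,2)[of S \<rho> V 0 0] by auto
    then have "openin T ((\<lambda>i. pre (V i)) 0)" "(\<lambda>i. pre (V i)) 0 \<noteq> {}" using pre_open pre_ne by auto
    then show ?case unfolding choquet_play_def by simp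
  next
    case (Suc n)
    have IH: "choquet_play T \<sigma> (\<lambda>i. pre (V i)) n" using Suc.IH play_mono[OF Suc.prems, of n] by simp
    have eqn: "(\<lambda>i. pre (V i)) (2*n+1) = \<sigma> (map (\<lambda>i. pre (V i)) [0..<2*n+1])"
    proof -
      have "V (2*n+1) = \<rho> (map V [0..<2*n+1])" using playD(4)[OF Suc.prems, of n] by simp
      also have "\<dots> = ext (\<sigma> (map (\<lambda>i. pre (V i)) [0..<2*n+1])) \<inter> V (2*n)"
        unfolding \<rho>_def by (simp add: o_def)
      finally have "pre (V (2*n+1)) = pre (ext (\<sigma> (map (\<lambda>i. pre (V i)) [0..<2*n+1]))) \<inter> pre (V (2*n))"
        unfolding pre_def by auto
      also have "\<dots> = \<sigma> (map (\<lambda>i. pre (V i)) [0..<2*n+1]) \<inter> pre (V (2*n))"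
        using ext[OF legalD(1)[OF lg IH]] by simp
      also have "\<dots> = \<sigma> (map (\<lambda>i. pre (V i)) [0..<2*n+1])"
        using legalD(3)[OF lg IH] by auto
      finally show ?thesis by simp
    qed
    show ?case
      unfolding choquet_play_def
    proof (intro allI impI conjI)
      fix k assume k: "k \<le> Suc n"
      show "openin T ((\<lambda>i. pre (V i)) (2*k))" using pre_open playD(1)[OF Suc.prems k] by simp
      show "(\<lambda>i. pre (V i)) (2*k) \<noteq> {}" using pre_ne playD(1,2)[OF Suc.prems k] by simp
      show "(\<lambda>i. pre (V i)) (2*k) \<subseteq> (\<lambda>i. pre (V i)) (2*k - 1)" if "0 < k"
        using playD(3)[OF Suc.prems k that] unfolding pre_def by auto
      show "(\<lambda>i. pre (V i)) (2*k+1) = \<sigma> (map (\<lambda>i. pre (V i)) [0..<2*k+1])" if "k < Suc n"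
      proof (cases "k = n")
        case True then show ?thesis using eqn by simp
      next
        case False then show ?thesis using playD(4)[OF IH, of k] that by simp
      qed
    qed
  qed
  have "legal S \<rho>"
    unfolding legal_def
  proof (intro allI impI conjI)
    fix V n assume p: "choquet_play S \<rho> V n"
    have kp: "choquet_play T \<sigma> (\<lambda>i. pre (V i)) n" using key[OF p] .
    define W where "W = \<sigma> (map (\<lambda>i. pre (V i)) [0..<2*n+1])"
    have W: "openin T W" "W \<noteq> {}" "W \<subseteq> pre (V (2*n))"
      using legalD[OF lg kp] unfolding W_def by auto
    have r: "\<rho> (map V [0..<2*n+1]) = ext W \<inter> V (2*n)"
      unfolding \<rho>_def W_def by (simp add: o_def)
    show "openin S (\<rho> (map V [0..<2*n+1]))"
      unfolding r using ext[OF W(1)] playD(1)[OF p order_refl] by (intro openin_Int) auto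
    show "\<rho> (map V [0..<2*n+1]) \<noteq> {}"
    proof -
      obtain x where "x \<in> W" using W(2) by blast
      then have "x \<in> pre (ext W)" "x \<in> pre (V (2*n))" using ext[OF W(1)] W(3) by auto
      then have "e x \<in> ext W" "e x \<in> V (2*n)" unfolding pre_def by auto
      then show ?thesis using r by blast
    qed
    show "\<rho> (map V [0..<2*n+1]) \<subseteq> V (2*n)" using r by blast
  qed
  moreover have "\<Inter> (range V) \<inter> e ` topspace T \<noteq> {}" if "\<forall>n. choquet_play S \<rho> V n" for V
  proof -
    have "\<forall>n. choquet_play T \<sigma> (\<lambda>i. pre (V i)) n" using key that by blast
    then obtain x where "x \<in> \<Inter> (range (\<lambda>i. pre (V i)))" using win by blast
    then have "x \<in> topspace T" "\<forall>i. e x \<in> V i" unfolding pre_def by auto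
    then show ?thesis by blast
  qed
  ultimately show ?thesis by blast
qed



primrec lift :: "('b set list \<Rightarrow> 'b set) \<Rightarrow> ('a set \<Rightarrow> 'b set) \<Rightarrow> (nat \<Rightarrow> 'a set) \<Rightarrow> nat \<Rightarrow> nat \<Rightarrow> 'b set" where
  "lift \<rho> ext U 0 = (\<lambda>i. ext (U 0))"
| "lift \<rho> ext U (Suc k) = (let f = lift \<rho> ext U k; r = \<rho> (map f [0..<2*k+1]) in
      f(2*k+1 := r, 2*k+2 := ext (U (2*k+2)) \<inter> r))"

lemma lift_prefix: "i \<le> 2*k \<Longrightarrow> k \<le> m \<Longrightarrow> lift \<rho> ext U m i = lift \<rho> ext U k i"
proof (induction m)
  case 0 then show ?case by simp
next
  case (Suc m)
  show ?case
  proof (cases "k = Suc m")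
    case True then show ?thesis by simp
  next
    case False
    then have "k \<le> m" using Suc.prems by simp
    then show ?thesis using Suc.IH Suc.prems by (simp add: Let_def)
  qed
qed

lemma lift_local: "(\<And>i. i \<le> 2*k \<Longrightarrow> U i = U' i) \<Longrightarrow> lift \<rho> ext U k = lift \<rho> ext U' k"
proof (induction k)
  case 0 then show ?case by simp
next
  case (Suc k)
  have "lift \<rho> ext U k = lift \<rho> ext U' k" using Suc.IH Suc.prems by simp
  moreover have "U (2*k+2) = U' (2*k+2)" using Suc.prems by simp
  ultimately show ?case by (simp add: Let_def)
qed

lemma lift_diag_map: "map (\<lambda>i. lift \<rho> ext U i i) [0..<2*k+1] = map (lift \<rho> ext U k) [0..<2*k+1]"
proof (rule map_cong[OF refl])
  fix i assume "i \<in> set [0..<2*k+1]"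
  then have i: "i \<le> 2*k" by auto
  show "lift \<rho> ext U i i = lift \<rho> ext U k i"
  proof (cases "i \<le> k")
    case True then show ?thesis using lift_prefix[of i i k \<rho> ext U] by simp
  next
    case False then show ?thesis using lift_prefix[of i k i \<rho> ext U] i by simp
  qed
qed

lemma lift_odd: "lift \<rho> ext U (2*k+1) (2*k+1) = \<rho> (map (\<lambda>i. lift \<rho> ext U i i) [0..<2*k+1])"
proof -
  have "lift \<rho> ext U (2*k+1) (2*k+1) = lift \<rho> ext U (Suc k) (2*k+1)"
    using lift_prefix[of "2*k+1" "Suc k" "2*k+1"] by simp
  also have "\<dots> = \<rho> (map (lift \<rho> ext U k) [0..<2*k+1])" by (simp add: Let_def)
  finally show ?thesis using lift_diag_map by metis
qed

lemma lift_even: "lift \<rho> ext U (2*k+2) (2*k+2) = ext (U (2*k+2)) \<inter> lift \<rho> ext U (2*k+1) (2*k+1)"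
proof -
  have "lift \<rho> ext U (2*k+2) (2*k+2) = lift \<rho> ext U (Suc k) (2*k+2)"
    using lift_prefix[of "2*k+2" "Suc k" "2*k+2"] by simp
  also have "\<dots> = ext (U (2*k+2)) \<inter> \<rho> (map (lift \<rho> ext U k) [0..<2*k+1])" by (simp add: Let_def)
  also have "\<rho> (map (lift \<rho> ext U k) [0..<2*k+1]) = lift \<rho> ext U (2*k+1) (2*k+1)"
    unfolding lift_odd lift_diag_map ..
  finally show ?thesis .
qed

lemma transfer_from_dense:
  assumes emb: "embedding_map T S e" and dense: "S closure_of (e ` topspace T) = topspace S"
    and lg: "legal S \<rho>" and win: "\<forall>V. (\<forall>n. choquet_play S \<rho> V n) \<longrightarrow> \<Inter> (range V) \<noteq> {}"
    and gd: "gdelta_dense S (e ` topspace T)"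
  shows "choquet_space T"
proof -
  define pre where "pre V = {x\<in>topspace T. e x \<in> V}" for V
  define ext where "ext W = (SOME Ob. openin S Ob \<and> W = pre Ob)" for W
  have ext0: "openin S (ext W) \<and> W = pre (ext W)" if "openin T W" for W
  proof -
    have "\<exists>Ob. openin S Ob \<and> W = pre Ob" using emb_open[OF emb that] unfolding pre_def .
    then show ?thesis unfolding ext_def by (rule someI_ex)
  qed
  have ext: "openin S (ext W) \<and> pre (ext W) = W" if "openin T W" for W
    using ext0[OF that] by metis
  have pre_open: "openin T (pre V)" if "openin S V" for V
    using openin_continuous_map_preimage[OF emb_cont[OF emb] that] pre_def by simp
  define \<sigma> where "\<sigma> xs = pre (\<rho> (map (lift \<rho> ext (\<lambda>i. xs ! i) ((length xs - 1) div 2)) [0..<length xs]))" for xs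
  define V where "V U i = lift \<rho> ext U i i" for U i
  have \<sigma>_eq: "\<sigma> (map U [0..<2*k+1]) = pre (V U (2*k+1))" for U k
  proof -
    have "lift \<rho> ext (\<lambda>i. map U [0..<2*k+1] ! i) k = lift \<rho> ext U k"
    proof (rule lift_local)
      fix i assume "i \<le> 2*k"
      then have "i < length [0..<2*k+1]" by simp
      then show "map U [0..<2*k+1] ! i = U i" by (simp only: nth_map) (simp del: upt_Suc)
    qed
    moreover have "\<sigma> (map U [0..<2*k+1]) = pre (\<rho> (map (lift \<rho> ext (\<lambda>i. map U [0..<2*k+1] ! i) k) [0..<2*k+1]))"
      unfolding \<sigma>_def by (simp del: upt_Suc)
    ultimately have "\<sigma> (map U [0..<2*k+1]) = pre (\<rho> (map (lift \<rho> ext U k) [0..<2*k+1]))"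
      by simp
    also have "\<dots> = pre (V U (2*k+1))"
      unfolding V_def lift_odd lift_diag_map ..
    finally show ?thesis .
  qed
  have claim: "choquet_play S \<rho> (V U) n \<and> (\<forall>i\<le>2*n. pre (V U i) = U i)"
    if "choquet_play T \<sigma> U n" for U n
    using that
  proof (induction n)
    case 0
    have "openin T (U 0)" "U 0 \<noteq> {}" using playD(1,2)[OF 0, of 0] by auto
    moreover have "V U 0 = ext (U 0)" unfolding V_def by simp
    ultimately have "openin S (V U 0)" "pre (V U 0) = U 0" using ext by auto
    moreover have "V U 0 \<noteq> {}" using calculation \<open>U 0 \<noteq> {}\<close> unfolding pre_def by auto
    ultimately show ?case unfolding choquet_play_def by auto
  next
    case (Suc n)
    have pn: "choquet_play T \<sigma> U n" using play_mono[OF Suc.prems, of n] by simp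
    note IH = Suc.IH[OF pn]
    have odd: "V U (2*n+1) = \<rho> (map (V U) [0..<2*n+1])"
      unfolding V_def by (rule lift_odd)
    have L: "openin S (V U (2*n+1))" "V U (2*n+1) \<noteq> {}" "V U (2*n+1) \<subseteq> V U (2*n)"
      using legalD[OF lg conjunct1[OF IH]] odd by auto
    have U1: "U (2*n+1) = pre (V U (2*n+1))"
      using playD(4)[OF Suc.prems, of n] \<sigma>_eq by simp
    have U2: "openin T (U (2*n+2))" "U (2*n+2) \<noteq> {}" "U (2*n+2) \<subseteq> U (2*n+1)"
      using playD(1,2,3)[OF Suc.prems, of "Suc n"] by auto
    have even: "V U (2*n+2) = ext (U (2*n+2)) \<inter> V U (2*n+1)"
      unfolding V_def by (rule lift_even)
    have pre2: "pre (V U (2*n+2)) = U (2*n+2)"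
    proof -
      have "pre (V U (2*n+2)) = pre (ext (U (2*n+2))) \<inter> pre (V U (2*n+1))"
        unfolding even pre_def by auto
      then show ?thesis using ext[OF U2(1)] U1 U2(3) by auto
    qed
    have E: "openin S (V U (2*n+2))" "V U (2*n+2) \<noteq> {}" "V U (2*n+2) \<subseteq> V U (2*n+1)"
    proof -
      show "openin S (V U (2*n+2))" unfolding even using ext[OF U2(1)] L(1) by (intro openin_Int) auto
      show "V U (2*n+2) \<noteq> {}" using pre2 U2(2) unfolding pre_def by auto
      show "V U (2*n+2) \<subseteq> V U (2*n+1)" unfolding even by blast
    qed
    have P: "choquet_play S \<rho> (V U) (Suc n)"
      unfolding choquet_play_def
    proof (intro allI impI conjI)
      fix k assume k: "k \<le> Suc n"
      show "openin S (V U (2*k))"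
      proof (cases "k = Suc n")
        case True then show ?thesis using E(1) by simp
      next
        case False then show ?thesis using playD(1)[OF conjunct1[OF IH], of k] k by simp
      qed
      show "V U (2*k) \<noteq> {}"
      proof (cases "k = Suc n")
        case True then show ?thesis using E(2) by simp
      next
        case False then show ?thesis using playD(2)[OF conjunct1[OF IH], of k] k by simp
      qed
      show "V U (2*k) \<subseteq> V U (2*k - 1)" if "0 < k"
      proof (cases "k = Suc n")
        case True then show ?thesis using E(3) by simp
      next
        case False then show ?thesis using playD(3)[OF conjunct1[OF IH], of k] k that by simp
      qed
      show "V U (2*k+1) = \<rho> (map (V U) [0..<2*k+1])" if "k < Suc n"
        unfolding V_def by (rule lift_odd)
    qed
    have "\<forall>i\<le>2*Suc n. pre (V U i) = U i"
    proof (intro allI impI)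
      fix i assume "i \<le> 2 * Suc n"
      then have "i \<le> 2*n \<or> i = 2*n+1 \<or> i = 2*n+2" by auto
      then show "pre (V U i) = U i" using conjunct2[OF IH] U1 pre2 by (elim disjE) auto
    qed
    then show ?case using P by blast
  qed
  have "legal T \<sigma>"
    unfolding legal_def
  proof (intro allI impI conjI)
    fix U n assume p: "choquet_play T \<sigma> U n"
    note c = claim[OF p]
    have odd: "V U (2*n+1) = \<rho> (map (V U) [0..<2*n+1])"
      unfolding V_def by (rule lift_odd)
    have L: "openin S (V U (2*n+1))" "V U (2*n+1) \<noteq> {}" "V U (2*n+1) \<subseteq> V U (2*n)"
      using legalD[OF lg conjunct1[OF c]] odd by auto
    show "openin T (\<sigma> (map U [0..<2*n+1]))" using \<sigma>_eq pre_open L(1) by simp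
    have "pre (V U (2*n+1)) \<noteq> {}"
    proof -
      obtain y where "y \<in> V U (2*n+1)" using L(2) by blast
      have "\<exists>z\<in>e ` topspace T. z \<in> V U (2*n+1)" using dense_meets[OF dense L(1,2)] .
      then show ?thesis unfolding pre_def by auto
    qed
    then show "\<sigma> (map U [0..<2*n+1]) \<noteq> {}" using \<sigma>_eq by simp
    have "pre (V U (2*n+1)) \<subseteq> pre (V U (2*n))" using L(3) unfolding pre_def by auto
    then show "\<sigma> (map U [0..<2*n+1]) \<subseteq> U (2*n)" using \<sigma>_eq c by simp
  qed
  moreover have "\<Inter> (range U) \<noteq> {}" if all: "\<forall>n. choquet_play T \<sigma> U n" for U
  proof -
    have pl: "\<forall>n. choquet_play S \<rho> (V U) n" using claim all by blast
    have pe: "pre (V U i) = U i" for i using claim[of U i] all by auto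
    have ne: "\<Inter> (range (V U)) \<noteq> {}" using win pl by blast
    have "gdelta_in S (\<Inter> (range (V U)))"
    proof (rule gdelta_in_Inter)
      show "countable (range (V U))" by simp
      show "range (V U) \<noteq> {}" by simp
      fix Y assume "Y \<in> range (V U)"
      then obtain i where "Y = V U i" by blast
      then show "gdelta_in S Y" using play_open[OF lg pl, of i] open_imp_gdelta_in by simp
    qed
    then have "e ` topspace T \<inter> \<Inter> (range (V U)) \<noteq> {}"
      using gd[unfolded gdelta_dense_def, rule_format, OF conjI] ne by blast
    then obtain x where "x \<in> topspace T" "e x \<in> \<Inter> (range (V U))" by blast
    then have "x \<in> topspace T" "\<forall>i. e x \<in> V U i" by auto
    then have "\<forall>i. x \<in> U i" using pe unfolding pre_def by blast
    then show ?thesis by blast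
  qed
  ultimately show ?thesis unfolding choquet_space_legal by blast
qed



lemma tgD:
  assumes "topological_group H S"
  shows "group H" "topspace S = carrier H"
    "continuous_map (prod_topology S S) S (\<lambda>(x, y). x \<otimes>\<^bsub>H\<^esub> y)"
    "continuous_map S S (\<lambda>x. inv\<^bsub>H\<^esub> x)"
  using assms unfolding topological_group_def by auto

lemma tg_left_cont:
  assumes tg: "topological_group H S" and z: "z \<in> carrier H"
  shows "continuous_map S S (\<lambda>v. z \<otimes>\<^bsub>H\<^esub> v)"
proof -
  have "continuous_map S (prod_topology S S) (\<lambda>v. (z, v))"
    using z tgD(2)[OF tg] by (intro continuous_map_pairedI) auto
  then have "continuous_map S S ((\<lambda>(x, y). x \<otimes>\<^bsub>H\<^esub> y) \<circ> (\<lambda>v. (z, v)))"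
    using continuous_map_compose tgD(3)[OF tg] by blast
  then show ?thesis by (simp add: o_def)
qed

lemma tg_right_cont:
  assumes tg: "topological_group H S" and z: "z \<in> carrier H"
  shows "continuous_map S S (\<lambda>v. v \<otimes>\<^bsub>H\<^esub> z)"
proof -
  have "continuous_map S (prod_topology S S) (\<lambda>v. (v, z))"
    using z tgD(2)[OF tg] by (intro continuous_map_pairedI) auto
  then have "continuous_map S S ((\<lambda>(x, y). x \<otimes>\<^bsub>H\<^esub> y) \<circ> (\<lambda>v. (v, z)))"
    using continuous_map_compose tgD(3)[OF tg] by blast
  then show ?thesis by (simp add: o_def)
qed

lemma tg_left_open:
  fixes H :: "('b, 'c) monoid_scheme" (structure)
  assumes tg: "topological_group H S" and z: "z \<in> carrier H" and A: "openin S A"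
  shows "openin S ((\<lambda>v. z \<otimes>\<^bsub>H\<^esub> v) ` A)"
proof -
  interpret group H using tgD(1)[OF tg] .
  have sub: "A \<subseteq> carrier H" using openin_subset[OF A] tgD(2)[OF tg] by simp
  have "(\<lambda>v. z \<otimes> v) ` A = {u \<in> topspace S. inv z \<otimes> u \<in> A}"
  proof
    show "(\<lambda>v. z \<otimes> v) ` A \<subseteq> {u \<in> topspace S. inv z \<otimes> u \<in> A}"
      using sub z tgD(2)[OF tg] by (auto simp: m_assoc[symmetric])
    show "{u \<in> topspace S. inv z \<otimes> u \<in> A} \<subseteq> (\<lambda>v. z \<otimes> v) ` A"
    proof
      fix u assume u: "u \<in> {u \<in> topspace S. inv z \<otimes> u \<in> A}"
      then have "u \<in> carrier H" using tgD(2)[OF tg] by simp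
      then have "u = z \<otimes> (inv z \<otimes> u)" using z by (simp add: m_assoc[symmetric])
      then show "u \<in> (\<lambda>v. z \<otimes> v) ` A" using u by blast
    qed
  qed
  moreover have "openin S {u \<in> topspace S. inv z \<otimes> u \<in> A}"
    using openin_continuous_map_preimage[OF tg_left_cont[OF tg inv_closed[OF z]] A] .
  ultimately show ?thesis by simp
qed

lemma tg_right_open:
  fixes H :: "('b, 'c) monoid_scheme" (structure)
  assumes tg: "topological_group H S" and z: "z \<in> carrier H" and A: "openin S A"
  shows "openin S ((\<lambda>v. v \<otimes>\<^bsub>H\<^esub> z) ` A)"
proof -
  interpret group H using tgD(1)[OF tg] .
  have sub: "A \<subseteq> carrier H" using openin_subset[OF A] tgD(2)[OF tg] by simp
  have "(\<lambda>v. v \<otimes> z) ` A = {u \<in> topspace S. u \<otimes> inv z \<in> A}"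
  proof
    show "(\<lambda>v. v \<otimes> z) ` A \<subseteq> {u \<in> topspace S. u \<otimes> inv z \<in> A}"
      using sub z tgD(2)[OF tg] by (auto simp: m_assoc)
    show "{u \<in> topspace S. u \<otimes> inv z \<in> A} \<subseteq> (\<lambda>v. v \<otimes> z) ` A"
    proof
      fix u assume u: "u \<in> {u \<in> topspace S. u \<otimes> inv z \<in> A}"
      then have "u \<in> carrier H" using tgD(2)[OF tg] by simp
      then have "u = (u \<otimes> inv z) \<otimes> z" using z by (simp add: m_assoc)
      then show "u \<in> (\<lambda>v. v \<otimes> z) ` A" using u by blast
    qed
  qed
  moreover have "openin S {u \<in> topspace S. u \<otimes> inv z \<in> A}"
    using openin_continuous_map_preimage[OF tg_right_cont[OF tg inv_closed[OF z]] A] .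
  ultimately show ?thesis by simp
qed

lemma tg_nbhd:
  fixes H :: "('b, 'c) monoid_scheme" (structure)
  assumes tg: "topological_group H S" and O: "openin S Ob" "\<one>\<^bsub>H\<^esub> \<in> Ob"
  shows "\<exists>W. openin S W \<and> \<one>\<^bsub>H\<^esub> \<in> W \<and> (\<forall>u\<in>W. \<forall>v\<in>W. inv\<^bsub>H\<^esub> u \<otimes>\<^bsub>H\<^esub> v \<in> Ob)"
proof -
  interpret group H using tgD(1)[OF tg] .
  have c1: "continuous_map (prod_topology S S) (prod_topology S S) (\<lambda>p. (inv (fst p), snd p))"
    by (intro continuous_map_pairedI continuous_map_compose[of _ S fst S "\<lambda>x. inv x", unfolded o_def]
        continuous_map_fst continuous_map_snd tgD(4)[OF tg])
  have "continuous_map (prod_topology S S) S ((\<lambda>(x, y). x \<otimes> y) \<circ> (\<lambda>p. (inv (fst p), snd p)))"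
    using continuous_map_compose[OF c1 tgD(3)[OF tg]] .
  then have c: "continuous_map (prod_topology S S) S (\<lambda>p. inv (fst p) \<otimes> snd p)"
    by (simp add: o_def case_prod_beta)
  define P where "P = {p \<in> topspace (prod_topology S S). inv (fst p) \<otimes> snd p \<in> Ob}"
  have opP: "openin (prod_topology S S) P"
    unfolding P_def using openin_continuous_map_preimage[OF c O(1)] .
  have oneP: "(\<one>, \<one>) \<in> P"
  proof -
    have "\<one> \<in> topspace S" using tgD(2)[OF tg] one_closed by blast
    then have "(\<one>, \<one>) \<in> topspace (prod_topology S S)" by (simp only: topspace_prod_topology mem_Times_iff fst_conv snd_conv)
    moreover have "inv \<one> \<otimes> \<one> \<in> Ob"
    proof -
      have "inv \<one> \<otimes> \<one> = \<one>" by simp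
      then show ?thesis using O(2) by (simp only:)
    qed
    ultimately show ?thesis unfolding P_def mem_Collect_eq fst_conv snd_conv by (rule conjI)
  qed
  obtain U V where UV: "openin S U" "openin S V" "\<one> \<in> U" "\<one> \<in> V" "U \<times> V \<subseteq> P"
    using openin_prod_topology_alt[THEN iffD1, OF opP, rule_format, OF oneP] by blast
  have "openin S (U \<inter> V)" using openin_Int[OF UV(1,2)] .
  moreover have "\<forall>u\<in>U \<inter> V. \<forall>v\<in>U \<inter> V. inv u \<otimes> v \<in> Ob"
  proof (intro ballI)
    fix u v assume "u \<in> U \<inter> V" "v \<in> U \<inter> V"
    then have "(u, v) \<in> P" using UV(5) by blast
    then show "inv u \<otimes> v \<in> Ob" unfolding P_def by simp
  qed
  moreover have "\<one> \<in> U \<inter> V" using UV(3,4) by (rule IntI)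
  ultimately show ?thesis by (intro exI[of _ "U \<inter> V"] conjI)
qed



declare upt_Suc[simp del]

lemma (in group) gl1: "z \<in> carrier G \<Longrightarrow> u \<in> carrier G \<Longrightarrow> v \<in> carrier G \<Longrightarrow> inv (z \<otimes> u) \<otimes> (z \<otimes> v) = inv u \<otimes> v"
proof -
  assume c: "z \<in> carrier G" "u \<in> carrier G" "v \<in> carrier G"
  have "inv (z \<otimes> u) \<otimes> (z \<otimes> v) = (inv u \<otimes> inv z) \<otimes> (z \<otimes> v)" using c by (simp add: inv_mult_group)
  also have "\<dots> = inv u \<otimes> (inv z \<otimes> (z \<otimes> v))" using c by (simp add: m_assoc)
  also have "inv z \<otimes> (z \<otimes> v) = v" using c by (simp add: m_assoc[symmetric])
  finally show ?thesis .
qed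

lemma (in group) gl2: "b \<in> carrier G \<Longrightarrow> d \<in> carrier G \<Longrightarrow> p \<in> carrier G \<Longrightarrow> b \<otimes> (inv (d \<otimes> b) \<otimes> p) = inv d \<otimes> p"
proof -
  assume c: "b \<in> carrier G" "d \<in> carrier G" "p \<in> carrier G"
  have "b \<otimes> (inv (d \<otimes> b) \<otimes> p) = b \<otimes> ((inv b \<otimes> inv d) \<otimes> p)" using c by (simp add: inv_mult_group)
  also have "\<dots> = b \<otimes> (inv b \<otimes> (inv d \<otimes> p))" using c by (simp add: m_assoc)
  also have "b \<otimes> (inv b \<otimes> (inv d \<otimes> p)) = inv d \<otimes> p" using c by (simp add: m_assoc[symmetric])
  finally show ?thesis .
qed

lemma (in group) gl3: "b \<in> carrier G \<Longrightarrow> v \<in> carrier G \<Longrightarrow> (v \<otimes> inv b) \<otimes> b = v"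
  by (simp add: m_assoc)

lemma (in group) gl4: "b \<in> carrier G \<Longrightarrow> v \<in> carrier G \<Longrightarrow> (v \<otimes> b) \<otimes> inv b = v"
  by (simp add: m_assoc)

lemma play_0I: "openin T (U 0) \<Longrightarrow> U 0 \<noteq> {} \<Longrightarrow> choquet_play T \<sigma> U 0"
  unfolding choquet_play_def by simp

lemma play_SucI:
  assumes "choquet_play T \<sigma> U n" "openin T (U (2*n+2))" "U (2*n+2) \<noteq> {}" "U (2*n+2) \<subseteq> U (2*n+1)"
    "U (2*n+1) = \<sigma> (map U [0..<2*n+1])"
  shows "choquet_play T \<sigma> U (Suc n)"
  unfolding choquet_play_def
proof (intro allI impI conjI)
  fix k assume k: "k \<le> Suc n"
  show "openin T (U (2*k))"
  proof (cases "k = Suc n")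
    case True then show ?thesis using assms(2) by simp
  next
    case False then show ?thesis using playD(1)[OF assms(1), of k] k by simp
  qed
  show "U (2*k) \<noteq> {}"
  proof (cases "k = Suc n")
    case True then show ?thesis using assms(3) by simp
  next
    case False then show ?thesis using playD(2)[OF assms(1), of k] k by simp
  qed
  show "U (2*k) \<subseteq> U (2*k - 1)" if "0 < k"
  proof (cases "k = Suc n")
    case True then show ?thesis using assms(4) by simp
  next
    case False then show ?thesis using playD(3)[OF assms(1), of k] k that by simp
  qed
  show "U (2*k+1) = \<sigma> (map U [0..<2*k+1])" if "k < Suc n"
  proof (cases "k = n")
    case True then show ?thesis using assms(5) by simp
  next
    case False then show ?thesis using playD(4)[OF assms(1), of k] that by simp
  qed
qed

context
  fixes \<rho> :: "'b set list \<Rightarrow> 'b set" and r r' :: "'b set \<Rightarrow> 'b set"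
    and sh :: "nat \<Rightarrow> 'b set \<Rightarrow> 'b set" and P0 :: "'b set"
begin

primrec dual :: "nat \<Rightarrow> (nat \<Rightarrow> 'b set) \<times> (nat \<Rightarrow> 'b set)" where
  "dual 0 = ((\<lambda>i. P0), (\<lambda>i. {}))"
| "dual (Suc k) = (let P = fst (dual k); Q = snd (dual k);
      p1 = \<rho> (map P [0..<2*k+1]); Q' = Q(2*k := r p1); q1 = \<rho> (map Q' [0..<2*k+1])
    in (P(2*k+1 := p1, 2*k+2 := sh k (r' q1)), Q'(2*k+1 := q1)))"

lemma dual_prefixP: "i \<le> 2*k \<Longrightarrow> k \<le> m \<Longrightarrow> fst (dual m) i = fst (dual k) i"
proof (induction m)
  case 0 then show ?case by simp
next
  case (Suc m)
  show ?case
  proof (cases "k = Suc m")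
    case True then show ?thesis by simp
  next
    case False
    then have "k \<le> m" using Suc.prems by simp
    then show ?thesis using Suc.IH Suc.prems by (simp add: Let_def)
  qed
qed

lemma dual_prefixQ: "i < 2*k \<Longrightarrow> k \<le> m \<Longrightarrow> snd (dual m) i = snd (dual k) i"
proof (induction m)
  case 0 then show ?case by simp
next
  case (Suc m)
  show ?case
  proof (cases "k = Suc m")
    case True then show ?thesis by simp
  next
    case False
    then have "k \<le> m" using Suc.prems by simp
    then show ?thesis using Suc.IH Suc.prems by (simp add: Let_def)
  qed
qed

definition Pf :: "nat \<Rightarrow> 'b set" where "Pf i = fst (dual i) i"
definition Qf :: "nat \<Rightarrow> 'b set" where "Qf i = snd (dual (Suc i)) i"

lemma Pf_map: "map Pf [0..<2*k+1] = map (fst (dual k)) [0..<2*k+1]"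
proof (rule map_cong[OF refl])
  fix i assume "i \<in> set [0..<2*k+1]"
  then have i: "i \<le> 2*k" by auto
  show "Pf i = fst (dual k) i"
  proof (cases "i \<le> k")
    case True then show ?thesis unfolding Pf_def using dual_prefixP[of i i k] by simp
  next
    case False then show ?thesis unfolding Pf_def using dual_prefixP[of i k i] i by simp
  qed
qed

lemma Qf_map: "map Qf [0..<2*k+1] = map (snd (dual (Suc k))) [0..<2*k+1]"
proof (rule map_cong[OF refl])
  fix i assume "i \<in> set [0..<2*k+1]"
  then have i: "i \<le> 2*k" by auto
  show "Qf i = snd (dual (Suc k)) i"
  proof (cases "i \<le> k")
    case True then show ?thesis unfolding Qf_def using dual_prefixQ[of i "Suc i" "Suc k"] by simp
  next
    case False then show ?thesis unfolding Qf_def using dual_prefixQ[of i "Suc k" "Suc i"] i by simp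
  qed
qed

lemma Pf0: "Pf 0 = P0"
  unfolding Pf_def by simp

lemma dual_Suc_fst: "fst (dual (Suc k)) (2*k+1) = \<rho> (map Pf [0..<2*k+1])"
  unfolding Pf_map by (simp add: Let_def)

lemma dual_Suc_snd0: "snd (dual (Suc k)) (2*k) = r (\<rho> (map Pf [0..<2*k+1]))"
  unfolding Pf_map by (simp add: Let_def)

lemma dual_Suc_snd1: "snd (dual (Suc k)) (2*k+1) = \<rho> (map Qf [0..<2*k+1])"
proof -
  define Q' where "Q' = (snd (dual k))(2*k := r (\<rho> (map (fst (dual k)) [0..<2*k+1])))"
  have sd: "snd (dual (Suc k)) = Q'(2*k+1 := \<rho> (map Q' [0..<2*k+1]))"
    unfolding Q'_def by (simp add: Let_def)
  have "map Qf [0..<2*k+1] = map (snd (dual (Suc k))) [0..<2*k+1]" by (rule Qf_map)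
  also have "\<dots> = map Q' [0..<2*k+1]" unfolding sd by (rule map_fun_upd) simp
  finally have eq: "map Qf [0..<2*k+1] = map Q' [0..<2*k+1]" .
  show ?thesis unfolding sd eq by (rule fun_upd_same)
qed

lemma dual_Suc_fst2: "fst (dual (Suc k)) (2*k+2) = sh k (r' (\<rho> (map Qf [0..<2*k+1])))"
proof -
  have "snd (dual (Suc k)) (2*k+1) = (let P = fst (dual k); Q = snd (dual k);
      p1 = \<rho> (map P [0..<2*k+1]); Q' = Q(2*k := r p1) in \<rho> (map Q' [0..<2*k+1]))"
    by (simp add: Let_def)
  moreover have "fst (dual (Suc k)) (2*k+2) = (let P = fst (dual k); Q = snd (dual k);
      p1 = \<rho> (map P [0..<2*k+1]); Q' = Q(2*k := r p1) in sh k (r' (\<rho> (map Q' [0..<2*k+1]))))"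
    by (simp add: Let_def)
  ultimately have "fst (dual (Suc k)) (2*k+2) = sh k (r' (snd (dual (Suc k)) (2*k+1)))"
    by (simp add: Let_def)
  then show ?thesis using dual_Suc_snd1 by simp
qed

lemma Pf_odd: "Pf (2*k+1) = \<rho> (map Pf [0..<2*k+1])"
proof -
  have "Pf (2*k+1) = fst (dual (Suc k)) (2*k+1)"
    unfolding Pf_def using dual_prefixP[of "2*k+1" "Suc k" "2*k+1"] by simp
  then show ?thesis using dual_Suc_fst by simp
qed

lemma Pf_even: "Pf (2*k+2) = sh k (r' (Qf (2*k+1)))"
proof -
  have "Pf (2*k+2) = fst (dual (Suc k)) (2*k+2)"
    unfolding Pf_def using dual_prefixP[of "2*k+2" "Suc k" "2*k+2"] by simp
  moreover have "Qf (2*k+1) = snd (dual (Suc k)) (2*k+1)"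
    unfolding Qf_def using dual_prefixQ[of "2*k+1" "Suc k" "Suc (2*k+1)"] by simp
  ultimately show ?thesis using dual_Suc_fst2 dual_Suc_snd1 by simp
qed

lemma Qf_even: "Qf (2*k) = r (Pf (2*k+1))"
proof -
  have "Qf (2*k) = snd (dual (Suc k)) (2*k)"
    unfolding Qf_def using dual_prefixQ[of "2*k" "Suc k" "Suc (2*k)"] by simp
  then show ?thesis using dual_Suc_snd0 Pf_odd by simp
qed

lemma Qf_odd: "Qf (2*k+1) = \<rho> (map Qf [0..<2*k+1])"
proof -
  have "Qf (2*k+1) = snd (dual (Suc k)) (2*k+1)"
    unfolding Qf_def using dual_prefixQ[of "2*k+1" "Suc k" "Suc (2*k+1)"] by simp
  then show ?thesis using dual_Suc_snd1 by simp
qed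

end



lemma gdelta_dense_group:
  fixes H :: "('b, 'c) monoid_scheme" (structure)
  assumes tg: "topological_group H S" and lg: "legal S \<rho>"
    and win: "\<forall>V. (\<forall>n. choquet_play S \<rho> V n) \<longrightarrow> \<Inter> (range V) \<inter> D \<noteq> {}"
    and Dsub: "D \<subseteq> carrier H" and Dcl: "\<And>x y. x \<in> D \<Longrightarrow> y \<in> D \<Longrightarrow> inv x \<otimes> y \<in> D"
  shows "gdelta_dense S D"
  unfolding gdelta_dense_def
proof (intro allI impI)
  fix B assume "gdelta_in S B \<and> B \<noteq> {}"
  then have gB: "gdelta_in S B" and Bne: "B \<noteq> {}" by auto
  interpret group H using tgD(1)[OF tg] .
  have top: "topspace S = carrier H" using tgD(2)[OF tg] .
  obtain b where b: "b \<in> B" using Bne by blast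
  have Bsub: "B \<subseteq> carrier H" using gdelta_in_subset[OF gB] top by simp
  then have bc: "b \<in> carrier H" using b by blast
  have "(countable intersection_of openin S) B" using gB unfolding gdelta_in_alt by (rule conjunct2)
  then obtain \<U> where U: "countable \<U>" "\<U> \<subseteq> Collect (openin S)" "\<Inter>\<U> = B"
    unfolding intersection_of_def by blast
  define \<G> where "\<G> = insert (topspace S) \<U>"
  define Gs where "Gs = from_nat_into \<G>"
  have rG: "range Gs = \<G>" unfolding Gs_def \<G>_def using U(1) by simp
  have GinG: "Gs n \<in> \<G>" for n using rG by blast
  have Gopen: "openin S (Gs n)" for n
    using GinG[of n] U(2) unfolding \<G>_def by auto
  have bG: "b \<in> Gs n" for n
    using GinG[of n] U(3) b bc top unfolding \<G>_def by auto
  have GB: "\<Inter> (range Gs) \<subseteq> B" unfolding rG \<G>_def using U(3) by auto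
  define Ob where "Ob n = {y \<in> topspace S. b \<otimes> y \<in> Gs n}" for n
  have Oopen: "openin S (Ob n)" for n
    unfolding Ob_def using openin_continuous_map_preimage[OF tg_left_cont[OF tg bc] Gopen] .
  have Oone: "\<one> \<in> Ob n" for n
    unfolding Ob_def using bG[of n] bc top by simp
  have "\<forall>n. \<exists>W. openin S W \<and> \<one> \<in> W \<and> (\<forall>u\<in>W. \<forall>v\<in>W. inv u \<otimes> v \<in> Ob n)"
    using tg_nbhd[OF tg Oopen Oone] by blast
  then obtain W where W: "\<forall>n. openin S (W n) \<and> \<one> \<in> W n \<and> (\<forall>u\<in>W n. \<forall>v\<in>W n. inv u \<otimes> v \<in> Ob n)"
    using choice[of "\<lambda>n W. openin S W \<and> \<one> \<in> W \<and> (\<forall>u\<in>W. \<forall>v\<in>W. inv u \<otimes> v \<in> Ob n)"] by blast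
  define sel where "sel A = (SOME z. z \<in> A)" for A :: "'b set"
  define sh where "sh k A = A \<inter> (\<lambda>w. sel A \<otimes> w) ` W k" for k A
  define r where "r A = (\<lambda>v. v \<otimes> inv b) ` A" for A
  define r' where "r' A = (\<lambda>v. v \<otimes> b) ` A" for A
  define P where "P = Pf \<rho> r r' sh (topspace S)"
  define Q where "Q = Qf \<rho> r r' sh (topspace S)"
  have P0: "P 0 = topspace S" unfolding P_def by (rule Pf0)
  have Podd: "P (2*k+1) = \<rho> (map P [0..<2*k+1])" for k unfolding P_def by (rule Pf_odd)
  have Peven: "P (2*k+2) = sh k (r' (Q (2*k+1)))" for k unfolding P_def Q_def by (rule Pf_even)
  have Qeven: "Q (2*k) = r (P (2*k+1))" for k unfolding P_def Q_def by (rule Qf_even)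
  have Qodd: "Q (2*k+1) = \<rho> (map Q [0..<2*k+1])" for k unfolding Q_def by (rule Qf_odd)
  have sub_c: "A \<subseteq> carrier H" if "openin S A" for A using openin_subset[OF that] top by simp
  have rr': "r' (r A) = A" if "A \<subseteq> carrier H" for A
  proof -
    have "r' (r A) = (\<lambda>v. (v \<otimes> inv b) \<otimes> b) ` A" unfolding r_def r'_def image_image ..
    also have "\<dots> = A" using that gl3[OF bc] by (simp add: subset_iff image_iff)
    finally show ?thesis .
  qed
  have r'r: "r (r' A) = A" if "A \<subseteq> carrier H" for A
  proof -
    have "r (r' A) = (\<lambda>v. (v \<otimes> b) \<otimes> inv b) ` A" unfolding r_def r'_def image_image ..
    also have "\<dots> = A" using that gl4[OF bc] by (simp add: subset_iff image_iff)
    finally show ?thesis .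
  qed
  have r_open: "openin S (r A)" if "openin S A" for A
    unfolding r_def using tg_right_open[OF tg inv_closed[OF bc] that] .
  have r'_open: "openin S (r' A)" if "openin S A" for A
    unfolding r'_def using tg_right_open[OF tg bc that] .
  have r_ne: "r A \<noteq> {}" if "A \<noteq> {}" for A unfolding r_def using that by blast
  have r'_ne: "r' A \<noteq> {}" if "A \<noteq> {}" for A unfolding r'_def using that by blast
  have r_mono: "r A \<subseteq> r A'" if "A \<subseteq> A'" for A A' unfolding r_def using that by (rule image_mono)
  have r'_mono: "r' A \<subseteq> r' A'" if "A \<subseteq> A'" for A A' unfolding r'_def using that by (rule image_mono)
  have sh: "openin S (sh k A) \<and> sh k A \<noteq> {} \<and> sh k A \<subseteq> A \<and> sh k A \<subseteq> (\<lambda>w. sel A \<otimes> w) ` W k \<and> sel A \<in> carrier H"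
    if "openin S A" "A \<noteq> {}" for k A
  proof -
    have sA: "sel A \<in> A" unfolding sel_def using that(2) by (simp add: some_in_eq)
    then have sc: "sel A \<in> carrier H" using sub_c[OF that(1)] by blast
    have o: "openin S ((\<lambda>w. sel A \<otimes> w) ` W k)" using tg_left_open[OF tg sc] W by blast
    have "sel A \<otimes> \<one> \<in> (\<lambda>w. sel A \<otimes> w) ` W k" using W by blast
    then have "sel A \<in> (\<lambda>w. sel A \<otimes> w) ` W k" using sc by simp
    then have "sh k A \<noteq> {}" unfolding sh_def using sA by blast
    moreover have "openin S (sh k A)" unfolding sh_def using openin_Int[OF that(1) o] .
    ultimately show ?thesis unfolding sh_def using sc by blast
  qed
  have plays: "choquet_play S \<rho> P n \<and> choquet_play S \<rho> Q n" for n
  proof (induction n)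
    case 0
    have "\<one> \<in> topspace S" using top by simp
    then have pP: "choquet_play S \<rho> P 0" using P0 by (intro play_0I) auto
    have "P 1 = \<rho> (map P [0..<2*0+1])" using Podd[of 0] by simp
    then have L: "openin S (P 1)" "P 1 \<noteq> {}" using legalD(1,2)[OF lg pP] by auto
    have "Q 0 = r (P 1)" using Qeven[of 0] by simp
    then have "choquet_play S \<rho> Q 0" using r_open[OF L(1)] r_ne[OF L(2)] by (intro play_0I) auto
    then show ?case using pP by blast
  next
    case (Suc n)
    have pP: "choquet_play S \<rho> P n" and pQ: "choquet_play S \<rho> Q n" using Suc.IH by auto
    have LP: "openin S (P (2*n+1))" "P (2*n+1) \<noteq> {}" "P (2*n+1) \<subseteq> P (2*n)"
      using legalD[OF lg pP] Podd[of n] by auto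
    have LQ: "openin S (Q (2*n+1))" "Q (2*n+1) \<noteq> {}" "Q (2*n+1) \<subseteq> Q (2*n)"
      using legalD[OF lg pQ] Qodd[of n] by auto
    define A where "A = r' (Q (2*n+1))"
    have A: "openin S A" "A \<noteq> {}" "A \<subseteq> P (2*n+1)"
    proof -
      show "openin S A" unfolding A_def using r'_open[OF LQ(1)] .
      show "A \<noteq> {}" unfolding A_def using r'_ne[OF LQ(2)] .
      have "A \<subseteq> r' (Q (2*n))" unfolding A_def using r'_mono[OF LQ(3)] .
      also have "\<dots> = P (2*n+1)" using Qeven[of n] rr'[OF sub_c[OF LP(1)]] by simp
      finally show "A \<subseteq> P (2*n+1)" .
    qed
    have Pe: "P (2*n+2) = sh n A" unfolding A_def by (rule Peven)
    have pP': "choquet_play S \<rho> P (Suc n)"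
      using play_SucI[OF pP] Pe sh[OF A(1,2), of n] A(3) Podd[of n] by auto
    have eqP: "P (2*Suc n+1) = \<rho> (map P [0..<2*Suc n+1])" by (rule Podd)
    have i2: "2*Suc n = 2*n+2" by simp
    have LP2: "openin S (P (2*Suc n+1))" "P (2*Suc n+1) \<noteq> {}" "P (2*Suc n+1) \<subseteq> P (2*n+2)"
      unfolding eqP using legalD[OF lg pP'] unfolding i2 by auto
    have Qe: "Q (2*n+2) = r (P (2*Suc n+1))" using Qeven[of "Suc n"] unfolding i2 .
    have "Q (2*n+2) \<subseteq> r (P (2*n+2))" unfolding Qe using r_mono[OF LP2(3)] .
    also have "\<dots> \<subseteq> r A" using r_mono sh[OF A(1,2), of n] Pe by simp
    also have "r A = Q (2*n+1)" unfolding A_def using r'r[OF sub_c[OF LQ(1)]] .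
    finally have Qsub: "Q (2*n+2) \<subseteq> Q (2*n+1)" .
    have pQ': "choquet_play S \<rho> Q (Suc n)"
      using play_SucI[OF pQ] Qe r_open[OF LP2(1)] r_ne[OF LP2(2)] Qsub Qodd[of n] by auto
    show ?case using pP' pQ' by blast
  qed
  have allP: "\<forall>n. choquet_play S \<rho> P n" and allQ: "\<forall>n. choquet_play S \<rho> Q n"
    using plays by auto
  obtain p where p: "p \<in> \<Inter> (range P)" "p \<in> D" using win allP by blast
  obtain d where d: "d \<in> \<Inter> (range Q)" "d \<in> D" using win allQ by blast
  have pc: "p \<in> carrier H" and dc: "d \<in> carrier H" using p(2) d(2) Dsub by auto
  define q where "q = d \<otimes> b"
  have qP: "q \<in> P i" for i
  proof -
    have "d \<in> Q (2*i)" using d(1) by blast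
    then obtain v where v: "v \<in> P (2*i+1)" "d = v \<otimes> inv b" using Qeven[of i] unfolding r_def by blast
    have "v \<in> carrier H" using v(1) sub_c[OF play_open[OF lg allP]] by blast
    then have "q = v" unfolding q_def v(2) using gl3[OF bc] by simp
    then have "q \<in> P (2*i+1)" using v(1) by simp
    moreover have "P (2*i+1) \<subseteq> P i" using play_antimono[OF lg allP] by simp
    ultimately show ?thesis by blast
  qed
  define y where "y = inv d \<otimes> p"
  have yD: "y \<in> D" unfolding y_def using Dcl[OF d(2) p(2)] .
  have yG: "y \<in> Gs n" for n
  proof -
    define A where "A = r' (Q (2*n+1))"
    have oQ: "openin S (Q (2*n+1))" using play_open[OF lg allQ] .
    have "Q (2*n+1) \<noteq> {}" using legalD(2)[OF lg spec[OF allQ, of n]] Qodd[of n] by simp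
    then have A: "openin S A" "A \<noteq> {}" unfolding A_def using r'_open[OF oQ] r'_ne by auto
    have Pe: "P (2*n+2) = sh n A" unfolding A_def by (rule Peven)
    note shA = sh[OF A, of n]
    have "p \<in> P (2*n+2)" "q \<in> P (2*n+2)" using p(1) qP by auto
    then have "p \<in> (\<lambda>w. sel A \<otimes> w) ` W n" "q \<in> (\<lambda>w. sel A \<otimes> w) ` W n" using Pe shA by auto
    then obtain w1 w2 where w: "w1 \<in> W n" "w2 \<in> W n" "p = sel A \<otimes> w1" "q = sel A \<otimes> w2" by blast
    have wc: "w1 \<in> carrier H" "w2 \<in> carrier H" using w(1,2) W sub_c by blast+
    have "inv q \<otimes> p = inv w2 \<otimes> w1" unfolding w(3,4) using gl1[OF conjunct2[OF conjunct2[OF conjunct2[OF conjunct2[OF shA]]]] wc(2,1)] .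
    then have "inv q \<otimes> p \<in> Ob n" using W w(1,2) by simp
    then have "b \<otimes> (inv q \<otimes> p) \<in> Gs n" unfolding Ob_def by simp
    moreover have "b \<otimes> (inv q \<otimes> p) = y" unfolding q_def y_def using gl2[OF bc dc pc] .
    ultimately show ?thesis by simp
  qed
  have "y \<in> B" using GB yG by blast
  then show "D \<inter> B \<noteq> {}" using yD by blast
qed



theorem theorem4:
  fixes G :: "('a, 'm) monoid_scheme" and T :: "'a topology"
    and H :: "('b, 'n) monoid_scheme" and S :: "'b topology" and e :: "'a \<Rightarrow> 'b"
  assumes "topological_group G T"
    and "raikov_completion G T H S e"
  shows "choquet_space T \<longleftrightarrow> choquet_space S \<and> gdelta_dense S (e ` carrier G)"
proof -
  note tgG = assms(1)
  have tgH: "topological_group H S" and hom: "e \<in> hom G H" and emb: "embedding_map T S e"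
    and dense: "S closure_of (e ` carrier G) = topspace S"
    using assms(2) unfolding raikov_completion_def by auto
  have topT: "topspace T = carrier G" using tgD(2)[OF tgG] .
  have dense': "S closure_of (e ` topspace T) = topspace S" using dense topT by simp
  have gh: "group_hom G H e"
    unfolding group_hom_def group_hom_axioms_def using tgD(1)[OF tgG] tgD(1)[OF tgH] hom by simp
  have Dsub: "e ` carrier G \<subseteq> carrier H"
    using hom unfolding hom_def by auto
  have Dcl: "inv\<^bsub>H\<^esub> x \<otimes>\<^bsub>H\<^esub> y \<in> e ` carrier G" if xy: "x \<in> e ` carrier G" "y \<in> e ` carrier G" for x y
  proof -
    obtain a c where ac: "a \<in> carrier G" "c \<in> carrier G" "x = e a" "y = e c" using xy by blast
    have "inv\<^bsub>H\<^esub> x \<otimes>\<^bsub>H\<^esub> y = e (inv\<^bsub>G\<^esub> a \<otimes>\<^bsub>G\<^esub> c)"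
      using ac group_hom.hom_inv[OF gh] group_hom.hom_mult[OF gh] group.inv_closed[OF tgD(1)[OF tgG]] by simp
    moreover have "inv\<^bsub>G\<^esub> a \<otimes>\<^bsub>G\<^esub> c \<in> carrier G"
      using ac group.inv_closed[OF tgD(1)[OF tgG]] monoid.m_closed[OF group.is_monoid[OF tgD(1)[OF tgG]]] by blast
    ultimately show ?thesis by blast
  qed
  show ?thesis
  proof
    assume "choquet_space T"
    then obtain \<sigma> where lg: "legal T \<sigma>" and win: "\<forall>U. (\<forall>n. choquet_play T \<sigma> U n) \<longrightarrow> \<Inter> (range U) \<noteq> {}"
      unfolding choquet_space_legal by blast
    obtain \<rho> where lr: "legal S \<rho>"
      and wr: "\<forall>V. (\<forall>n. choquet_play S \<rho> V n) \<longrightarrow> \<Inter> (range V) \<inter> e ` topspace T \<noteq> {}"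
      using transfer_to_dense[OF emb dense' lg win] by blast
    have "choquet_space S"
      unfolding choquet_space_legal using lr wr by blast
    moreover have "gdelta_dense S (e ` carrier G)"
      using gdelta_dense_group[OF tgH lr _ Dsub Dcl] wr topT by simp
    ultimately show "choquet_space S \<and> gdelta_dense S (e ` carrier G)" by blast
  next
    assume a: "choquet_space S \<and> gdelta_dense S (e ` carrier G)"
    then obtain \<rho> where lr: "legal S \<rho>" and wr: "\<forall>V. (\<forall>n. choquet_play S \<rho> V n) \<longrightarrow> \<Inter> (range V) \<noteq> {}"
      unfolding choquet_space_legal by blast
    have gd: "gdelta_dense S (e ` topspace T)" using a topT by simp
    show "choquet_space T" using transfer_from_dense[OF emb dense' lr wr gd] .
  qed
qed

end
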